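(* Let $\mathcal{G}=(V,L)$ be a finite connected undirected graph with monitor set $M$ and non-monitor set $N=V\setminus M$, with measurement paths given by Controllable Arbitrary-path Probing (CAP). Let $S\subseteq N$ and $k\ge1$. Then $S$ is $k$-identifiable if and only if for every set $V'\subseteq N$ with $|V'|\le k-1$, each connected component of $\mathcal{G}-V'$ that contains a node of $S$ contains a monitor.
   Context: $\mathcal{G}-V'$ denotes the graph obtained by deleting the nodes of $V'$ and their incident links. Under CAP, the measurement paths $P$ are all walks in $\mathcal{G}$ (paths or cycles, repeated nodes/links allowed) starting and ending at monitors (possibly the same). A failure set is any $F\subseteq N$; a path fails iff it traverses a node of $F$. $P_F$ is the set of paths in $P$ traversing a node of $F$; $F_1,F_2$ distinguishable iff $P_{F_1}\ne P_{F_2}$. $S\subseteq N$ is $k$-identifiable if any two failure sets $F_1,F_2$ with $|F_1|,|F_2|\le k$ and $F_1\cap S\ne F_2\cap S$ are distinguishable. *)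

theory Defs
  imports Main
begin

definition undirected_graph :: "'a set \<Rightarrow> ('a \<Rightarrow> 'a \<Rightarrow> bool) \<Rightarrow> bool" where
  "undirected_graph V E \<longleftrightarrow> finite V \<and> (\<forall>u v. E u v \<longrightarrow> u \<in> V \<and> v \<in> V \<and> E v u \<and> u \<noteq> v)"

definition is_walk :: "'a set \<Rightarrow> ('a \<Rightarrow> 'a \<Rightarrow> bool) \<Rightarrow> 'a list \<Rightarrow> bool" where
  "is_walk V E p \<longleftrightarrow> p \<noteq> [] \<and> set p \<subseteq> V \<and> successively E p"

definition connected_graph :: "'a set \<Rightarrow> ('a \<Rightarrow> 'a \<Rightarrow> bool) \<Rightarrow> bool" where
  "connected_graph V E \<longleftrightarrow> V \<noteq> {} \<and>
     (\<forall>u\<in>V. \<forall>v\<in>V. \<exists>p. is_walk V E p \<and> hd p = u \<and> last p = v)"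

definition cap_paths :: "'a set \<Rightarrow> ('a \<Rightarrow> 'a \<Rightarrow> bool) \<Rightarrow> 'a set \<Rightarrow> 'a list set" where
  "cap_paths V E M = {p. is_walk V E p \<and> hd p \<in> M \<and> last p \<in> M}"

definition failed_paths :: "'a list set \<Rightarrow> 'a set \<Rightarrow> 'a list set" where
  "failed_paths P F = {p \<in> P. set p \<inter> F \<noteq> {}}"

definition k_identifiable ::
  "'a set \<Rightarrow> ('a \<Rightarrow> 'a \<Rightarrow> bool) \<Rightarrow> 'a set \<Rightarrow> 'a set \<Rightarrow> nat \<Rightarrow> bool" where
  "k_identifiable V E M S k \<longleftrightarrow>
     (\<forall>F1 F2. F1 \<subseteq> V - M \<and> F2 \<subseteq> V - M \<and> card F1 \<le> k \<and> card F2 \<le> k \<and> F1 \<inter> S \<noteq> F2 \<inter> S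
        \<longrightarrow> failed_paths (cap_paths V E M) F1 \<noteq> failed_paths (cap_paths V E M) F2)"

end

theory Submission
  imports Defs
begin

lemma walk_suffix:
  "successively E q \<Longrightarrow> q \<noteq> [] \<Longrightarrow> set q \<inter> A \<noteq> {} \<Longrightarrow>
   \<exists>r. r \<noteq> [] \<and> successively E r \<and> hd r \<in> A \<and> last r = last q \<and> set r \<subseteq> set q \<and> set r \<inter> A = {hd r}"
proof (induction q)
  case Nil then show ?case by simp
next
  case (Cons a q)
  show ?case
  proof (cases "q \<noteq> [] \<and> set q \<inter> A \<noteq> {}")
    case True
    have "successively E q" using Cons.prems(1) by (cases q) auto
    from Cons.IH[OF \<open>successively E q\<close> conjunct1[OF True] conjunct2[OF True]] obtain r where r: "r \<noteq> [] \<and> successively E r \<and> hd r \<in> A \<and> last r = last q \<and> set r \<subseteq> set q \<and> set r \<inter> A = {hd r}"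
      by blast
    then show ?thesis using True by (intro exI[of _ r]) auto
  next
    case False
    then have "a \<in> A" "set q \<inter> A = {}" using Cons.prems by auto
    then show ?thesis using Cons.prems by (intro exI[of _ "a # q"]) auto
  qed
qed

lemma closed_walk:
  assumes sym: "\<And>u v. E u v \<Longrightarrow> E v u" and "successively E r" and "r \<noteq> []"
  shows "successively E (rev r @ tl r) \<and> set (rev r @ tl r) = set r \<and>
         hd (rev r @ tl r) = last r \<and> last (rev r @ tl r) = last r"
proof -
  obtain x t where r: "r = x # t" using assms(3) by (cases r) auto
  have s1: "successively E (x # t)" using assms(2) r by simp
  have s2: "successively (\<lambda>a b. E b a) (x # t)"
    using s1 by (rule successively_mono) (auto intro: sym)
  have "successively E (rev t @ [x] @ t)"
  proof -
    have a: "successively E (rev t @ [x])" using s2 by (metis rev.simps(2) successively_rev)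
    have b: "successively E (x # t)" by (rule s1)
    show ?thesis using a b by (simp add: successively_append_iff)
  qed
  moreover have "hd (rev r @ tl r) = last r" using r by (cases t rule: rev_cases) auto
  moreover have "last (rev r @ tl r) = last r" using r by (cases t) auto
  ultimately show ?thesis using r by auto
qed

theorem lemma3:
  fixes V :: "'a set" and E :: "'a \<Rightarrow> 'a \<Rightarrow> bool" and M S :: "'a set" and k :: nat
  assumes "undirected_graph V E" and "connected_graph V E"
    and "M \<subseteq> V" and "S \<subseteq> V - M" and "k \<ge> 1"
  shows "k_identifiable V E M S k \<longleftrightarrow>
    (\<forall>V'. V' \<subseteq> V - M \<and> card V' \<le> k - 1 \<longrightarrow>
       (\<forall>s\<in>S - V'. \<exists>p. is_walk (V - V') E p \<and> hd p = s \<and> last p \<in> M))"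
proof
  have finV: "finite V" and sym: "\<And>u v. E u v \<Longrightarrow> E v u"
    using assms(1) unfolding undirected_graph_def by auto
  assume ki: "k_identifiable V E M S k"
  show "\<forall>V'. V' \<subseteq> V - M \<and> card V' \<le> k - 1 \<longrightarrow>
       (\<forall>s\<in>S - V'. \<exists>p. is_walk (V - V') E p \<and> hd p = s \<and> last p \<in> M)"
  proof (intro allI impI ballI)
    fix V' s assume V': "V' \<subseteq> V - M \<and> card V' \<le> k - 1" and s: "s \<in> S - V'"
    show "\<exists>p. is_walk (V - V') E p \<and> hd p = s \<and> last p \<in> M"
    proof (rule ccontr)
      assume no: "\<not> ?thesis"
      have finV': "finite V'" using V' finV by (meson Diff_subset finite_subset)
      have c: "card (insert s V') \<le> k"
      proof -
        have "card (insert s V') = Suc (card V')" using s finV' by simp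
        then show ?thesis using V' assms(5) by arith
      qed
      have "insert s V' \<subseteq> V - M" using V' s assms(4) by auto
      moreover have "insert s V' \<inter> S \<noteq> V' \<inter> S" using s by auto
      ultimately have ne: "failed_paths (cap_paths V E M) (insert s V') \<noteq> failed_paths (cap_paths V E M) V'"
      proof -
        have "card V' \<le> k" using V' by arith
        moreover have "V' \<subseteq> V - M" using V' by simp
        moreover have imp: "insert s V' \<subseteq> V - M \<and> V' \<subseteq> V - M \<and> card (insert s V') \<le> k \<and> card V' \<le> k \<and> insert s V' \<inter> S \<noteq> V' \<inter> S
          \<longrightarrow> failed_paths (cap_paths V E M) (insert s V') \<noteq> failed_paths (cap_paths V E M) V'"
          using ki[unfolded k_identifiable_def] by (rule spec[of _ V', OF spec[of _ "insert s V'"]])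
        ultimately show ?thesis
          using c \<open>insert s V' \<subseteq> V - M\<close> \<open>insert s V' \<inter> S \<noteq> V' \<inter> S\<close>
          by (intro mp[OF imp] conjI)
      qed
      have "failed_paths (cap_paths V E M) (insert s V') = failed_paths (cap_paths V E M) V'"
      proof (rule set_eqI, rule iffI)
        fix p assume p: "p \<in> failed_paths (cap_paths V E M) (insert s V')"
        show "p \<in> failed_paths (cap_paths V E M) V'"
        proof (rule ccontr)
          assume "p \<notin> failed_paths (cap_paths V E M) V'"
          then have av: "set p \<inter> V' = {}" and sp: "s \<in> set p" and pc: "p \<in> cap_paths V E M"
            using p unfolding failed_paths_def by auto
          obtain ys zs where pe: "p = ys @ s # zs" using sp by (meson split_list)
          have w: "is_walk V E p" "last p \<in> M" using pc unfolding cap_paths_def by auto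
          have "successively E (s # zs)" using w(1) pe unfolding is_walk_def
            by (simp add: successively_append_iff)
          moreover have "set (s # zs) \<subseteq> V - V'" using w(1) av pe unfolding is_walk_def by auto
          moreover have "last (s # zs) \<in> M" using w(2) pe by simp
          ultimately have "is_walk (V - V') E (s # zs) \<and> hd (s # zs) = s \<and> last (s # zs) \<in> M"
            unfolding is_walk_def by simp
          with no show False by blast
        qed
      next
        fix p assume "p \<in> failed_paths (cap_paths V E M) V'"
        then show "p \<in> failed_paths (cap_paths V E M) (insert s V')"
          unfolding failed_paths_def by auto
      qed
      with ne show False by simp
    qed
  qed
next
  have finV: "finite V" and sym: "\<And>u v. E u v \<Longrightarrow> E v u"
    using assms(1) unfolding undirected_graph_def by auto
  assume cond: "\<forall>V'. V' \<subseteq> V - M \<and> card V' \<le> k - 1 \<longrightarrow>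
       (\<forall>s\<in>S - V'. \<exists>p. is_walk (V - V') E p \<and> hd p = s \<and> last p \<in> M)"
  have main: "failed_paths (cap_paths V E M) F1 \<noteq> failed_paths (cap_paths V E M) F2"
    if F: "F1 \<subseteq> V - M" "F2 \<subseteq> V - M" "card F1 \<le> k" "card F2 \<le> k" and s: "s \<in> S" "s \<in> F1" "s \<notin> F2"
    for F1 F2 s
  proof -
    define V' where "V' = F1 \<inter> F2"
    have finF1: "finite F1" using F(1) finV by (meson Diff_subset finite_subset)
    have "V' \<subset> F1" using s unfolding V'_def by auto
    then have "card V' < card F1" using finF1 by (meson psubset_card_mono)
    then have cV: "card V' \<le> k - 1" using F(3) by linarith
    have "V' \<subseteq> V - M" using F unfolding V'_def by auto
    moreover have "s \<in> S - V'" using s unfolding V'_def by auto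
    ultimately have "\<exists>q. is_walk (V - V') E q \<and> hd q = s \<and> last q \<in> M"
      using cond[rule_format, of V' s] cV by simp
    then obtain q where q: "is_walk (V - V') E q" "hd q = s" "last q \<in> M" by blast
    have qne: "q \<noteq> []" and qs: "successively E q" and qset: "set q \<subseteq> V - V'"
      using q(1) unfolding is_walk_def by auto
    have "s \<in> set q" using q(2) qne by auto
    then have "set q \<inter> (F1 \<union> F2) \<noteq> {}" using s by auto
    from walk_suffix[OF qs qne this] obtain r where r0: "r \<noteq> [] \<and> successively E r \<and> hd r \<in> F1 \<union> F2 \<and> last r = last q
       \<and> set r \<subseteq> set q \<and> set r \<inter> (F1 \<union> F2) = {hd r}" by (elim exE)
    then have r: "r \<noteq> []" "successively E r" "hd r \<in> F1 \<union> F2" "last r = last q"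
       "set r \<subseteq> set q" "set r \<inter> (F1 \<union> F2) = {hd r}" by simp_all
    define c where "c = rev r @ tl r"
    have cc: "successively E c \<and> set c = set r \<and> hd c = last r \<and> last c = last r"
      unfolding c_def by (rule closed_walk[OF sym r(2,1)])
    have "c \<noteq> []" using cc r(1) unfolding c_def by simp
    then have cin: "c \<in> cap_paths V E M"
      using cc r qset q(3) unfolding cap_paths_def is_walk_def by auto
    have x: "hd r \<notin> V'" using r(1,5) qset by (metis Diff_iff hd_in_set subsetD)
    show ?thesis
    proof (cases "hd r \<in> F1")
      case True
      then have "hd r \<notin> F2" using x unfolding V'_def by auto
      moreover have "set r \<inter> F2 = {}"
      proof (rule equals0I)
        fix y assume "y \<in> set r \<inter> F2"
        then have "y \<in> set r \<inter> (F1 \<union> F2)" by blast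
        then have "y = hd r" using r(6) by simp
        then show False using \<open>y \<in> set r \<inter> F2\<close> \<open>hd r \<notin> F2\<close> by simp
      qed
      ultimately have "c \<in> failed_paths (cap_paths V E M) F1" "c \<notin> failed_paths (cap_paths V E M) F2"
        using True cin cc r(1,6) unfolding failed_paths_def by auto
      then show ?thesis by blast
    next
      case False
      then have "hd r \<in> F2" using r(3) by auto
      moreover have "set r \<inter> F1 = {}"
      proof (rule equals0I)
        fix y assume "y \<in> set r \<inter> F1"
        then have "y \<in> set r \<inter> (F1 \<union> F2)" by blast
        then have "y = hd r" using r(6) by simp
        then show False using \<open>y \<in> set r \<inter> F1\<close> False by simp
      qed
      ultimately have "c \<notin> failed_paths (cap_paths V E M) F1" "c \<in> failed_paths (cap_paths V E M) F2"
        using False cin cc r(1,6) unfolding failed_paths_def by auto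
      then show ?thesis by blast
    qed
  qed
  show "k_identifiable V E M S k"
    unfolding k_identifiable_def
  proof (intro allI impI)
    fix F1 F2 assume h: "F1 \<subseteq> V - M \<and> F2 \<subseteq> V - M \<and> card F1 \<le> k \<and> card F2 \<le> k \<and> F1 \<inter> S \<noteq> F2 \<inter> S"
    then obtain s where s: "s \<in> S" "(s \<in> F1 \<and> s \<notin> F2) \<or> (s \<in> F2 \<and> s \<notin> F1)" by blast
    show "failed_paths (cap_paths V E M) F1 \<noteq> failed_paths (cap_paths V E M) F2"
      using s(2)
    proof
      assume "s \<in> F1 \<and> s \<notin> F2"
      then show ?thesis using main[of F1 F2 s] h s(1) by simp
    next
      assume "s \<in> F2 \<and> s \<notin> F1"
      then show ?thesis using main[of F2 F1 s] h s(1) by auto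
    qed
  qed
qed

end
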